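(* Let $P_n$ be the path with $n$ vertices. (i) If $0\leq \alpha < \frac{1}{2}$, then for $1\leq k\leq n$, $$S_k(A_{\alpha}(P_n)) \leq 2\alpha k+\alpha-1+\alpha \csc\frac{\pi}{2n} \sin\frac{(2k+1)\pi}{2n} +(1-2\alpha)\csc\frac{\pi}{2(n+1)} \sin\frac{(2k+1)\pi}{2(n+1)}.$$ (ii) If $\frac{1}{2}\leq \alpha \leq 1$, then for $1\leq k\leq n$, $$S_k(A_{\alpha}(P_n))\leq 2\alpha k+(1-\alpha)\left(\csc\frac{\pi}{2n} \sin\frac{(2k+1)\pi}{2n}-1\right).$$
   Context: $A_{\alpha}(G)=\alpha D(G)+(1-\alpha)A(G)$, where $A(G)$ is the adjacency matrix and $D(G)$ the diagonal degree matrix. For a real symmetric matrix $M$ with eigenvalues $\lambda_1(M)\geq\cdots\geq\lambda_n(M)$, $S_k(M)=\sum_{i=1}^k\lambda_i(M)$. *)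

theory Defs
  imports "Jordan_Normal_Form.Char_Poly" "HOL-Library.Multiset" Complex_Main
begin

definition path_adj :: "nat \<Rightarrow> real mat" where
  "path_adj n = mat n n (\<lambda>(i, j). if i + 1 = j \<or> j + 1 = i then 1 else 0)"

definition path_deg :: "nat \<Rightarrow> real mat" where
  "path_deg n = mat n n (\<lambda>(i, j). if i = j then (\<Sum>l<n. path_adj n $$ (i, l)) else 0)"

definition A_alpha_path :: "real \<Rightarrow> nat \<Rightarrow> real mat" where
  "A_alpha_path \<alpha> n = \<alpha> \<cdot>\<^sub>m path_deg n + (1 - \<alpha>) \<cdot>\<^sub>m path_adj n"

definition eigenvalues_desc :: "real mat \<Rightarrow> real list" where
  "eigenvalues_desc M = rev (sorted_list_of_multiset (proots (char_poly M)))"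

definition S_k :: "nat \<Rightarrow> real mat \<Rightarrow> real" where
  "S_k k M = sum_list (take k (eigenvalues_desc M))"

end

theory Submission
  imports Defs "Jordan_Normal_Form.Schur_Decomposition" "HOL-Combinatorics.List_Permutation"
begin


lemma conj_real_vec[simp]: "conjugate (v :: real vec) = v" by (rule eq_vecI) auto

definition diagm :: "nat \<Rightarrow> (nat \<Rightarrow> real) \<Rightarrow> real mat" where
  "diagm n d = mat n n (\<lambda>(i,j). if i = j then d i else 0)"

lemma diagm_dims[simp]: "dim_row (diagm n d) = n" "dim_col (diagm n d) = n" unfolding diagm_def by simp_all

lemma diagm_carrier[simp]: "diagm n d \<in> carrier_mat n n" unfolding diagm_def by simp

lemma orthonormal_basis_hd:
  fixes u :: "real vec"
  assumes u: "u \<in> carrier_vec n" and uu: "u \<bullet> u = 1"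
  shows "\<exists>W. W \<in> carrier_mat n n \<and> W\<^sup>T * W = 1\<^sub>m n \<and> col W 0 = u"
proof -
  have n: "n > 0" using u uu by (cases n) (auto simp: scalar_prod_def)
  have u0: "u \<noteq> 0\<^sub>v n" using uu by auto
  interpret cof_vec_space n "TYPE(real)" .
  define b where "b = basis_completion u"
  from basis_completion[OF u u0, folded b_def]
  have dist_b: "distinct b" and indep: "\<not> lin_dep (set b)" and b: "set b \<subseteq> carrier_vec n"
    and hdb: "hd b = u" and len_b: "length b = n" by auto
  from hdb len_b n obtain vs where bv: "b = u # vs" by (cases b, auto)
  define ws where "ws = gram_schmidt n b"
  from gram_schmidt_result[OF b dist_b indep ws_def]
  have ws: "set ws \<subseteq> carrier_vec n" "corthogonal ws" "length ws = n"
    by (auto simp: len_b)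
  from gram_schmidt_hd[OF u, of vs, folded bv] have hdws: "hd ws = u" unfolding ws_def .
  define us where "us = map (\<lambda>w. (1 / sqrt (w \<bullet> w)) \<cdot>\<^sub>v w) ws"
  have len_us: "length us = n" unfolding us_def using ws by simp
  have us_c: "us ! i \<in> carrier_vec n" if "i < n" for i
    using that ws unfolding us_def by auto
  have wsi: "ws ! i \<in> carrier_vec n" if "i < n" for i using that ws by auto
  have wpos: "ws ! i \<bullet> ws ! i > 0" if "i < n" for i
  proof -
    have "ws ! i \<bullet> ws ! i \<noteq> 0" using corthogonalD[OF ws(2), of i i] that ws(3) by simp
    moreover have "ws ! i \<bullet> ws ! i \<ge> 0" by (simp add: scalar_prod_def sum_nonneg)
    ultimately show ?thesis by linarith
  qed
  have orth: "us ! i \<bullet> us ! j = (if i = j then 1 else 0)" if "i < n" "j < n" for i j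
  proof -
    have "us ! i \<bullet> us ! j = (1 / sqrt (ws!i \<bullet> ws!i)) * (1 / sqrt (ws!j \<bullet> ws!j)) * (ws ! i \<bullet> ws ! j)"
      unfolding us_def using that ws wsi[OF that(1)] wsi[OF that(2)] by simp
    moreover have "ws ! i \<bullet> ws ! j = 0" if "i \<noteq> j" using corthogonalD[OF ws(2), of i j] that \<open>i<n\<close> \<open>j<n\<close> ws(3) by simp
    moreover have "(1 / sqrt (ws!i \<bullet> ws!i)) * (1 / sqrt (ws!i \<bullet> ws!i)) * (ws ! i \<bullet> ws ! i) = 1"
      using wpos[OF that(1)] by (simp add: field_simps)
    ultimately show ?thesis by auto
  qed
  define W where "W = mat_of_cols n us"
  have W: "W \<in> carrier_mat n n" unfolding W_def using len_us by (metis mat_of_cols_carrier(1))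
  have colW: "col W i = us ! i" if "i < n" for i unfolding W_def using that len_us us_c by simp
  have "W\<^sup>T * W = 1\<^sub>m n"
    by (rule eq_matI, insert W, auto simp: colW orth)
  moreover have "col W 0 = u"
  proof -
    have "ws ! 0 = u" using hdws n ws(3) by (metis hd_conv_nth length_greater_0_conv)
    thus ?thesis using colW[OF n] uu unfolding us_def using n ws(3) by simp
  qed
  ultimately show ?thesis using W by blast
qed

lemma sym_real_eigenvalue:
  fixes A :: "real mat"
  assumes A: "A \<in> carrier_mat n n" and sym: "A\<^sup>T = A" and n: "n > 0"
  shows "\<exists>e v. v \<in> carrier_vec n \<and> v \<noteq> 0\<^sub>v n \<and> A *\<^sub>v v = e \<cdot>\<^sub>v v"
proof -
  let ?C = "map_mat complex_of_real A"
  have C: "?C \<in> carrier_mat n n" using A by simp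
  obtain as where cp: "char_poly ?C = (\<Prod>a\<leftarrow>as. [:-a,1:])" and len: "length as = n"
    using char_poly_factorized[OF C] by blast
  from n len obtain z where z: "z \<in> set as" by (cases as) auto
  have "poly (char_poly ?C) z = 0" unfolding cp using linear_poly_root[OF z] .
  hence "eigenvalue ?C z" using eigenvalue_root_char_poly[OF C] by simp
  then obtain v where "eigenvector ?C v z" unfolding eigenvalue_def by blast
  hence v: "v \<in> carrier_vec n" "v \<noteq> 0\<^sub>v n" "?C *\<^sub>v v = z \<cdot>\<^sub>v v"
    unfolding eigenvector_def using C by auto
  have Ci: "(?C *\<^sub>v v) $ i = (\<Sum>j<n. complex_of_real (A $$ (i,j)) * v $ j)" if i: "i < n" for i
    using i A v(1) by (simp add: scalar_prod_def row_def lessThan_atLeast0)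
  define s where "s = (\<Sum>i<n. cnj (v$i) * (?C *\<^sub>v v)$i)"
  define N where "N = (\<Sum>i<n. cnj (v$i) * v$i)"
  have s1: "s = z * N" unfolding s_def N_def v(3) using v(1)
    by (simp add: sum_distrib_left algebra_simps)
  have s2: "s = (\<Sum>i<n. \<Sum>j<n. cnj (v$i) * complex_of_real (A $$ (i,j)) * v$j)"
    unfolding s_def by (simp add: Ci sum_distrib_left mult.assoc)
  have Asym: "A $$ (i,j) = A $$ (j,i)" if "i < n" "j < n" for i j
    using sym that A by (metis carrier_matD index_transpose_mat(1))
  have "cnj s = (\<Sum>i<n. \<Sum>j<n. v$i * complex_of_real (A $$ (i,j)) * cnj (v$j))"
    unfolding s2 by (simp add: cnj_sum)
  also have "\<dots> = (\<Sum>j<n. \<Sum>i<n. v$i * complex_of_real (A $$ (i,j)) * cnj (v$j))"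
    by (rule sum.swap)
  also have "\<dots> = s" unfolding s2
    by (intro sum.cong refl, simp add: Asym mult.commute mult.left_commute)
  finally have cs: "cnj s = s" .
  have Nr: "N = complex_of_real (\<Sum>i<n. (cmod (v$i))^2)"
    unfolding N_def by (simp add: complex_norm_square mult.commute del: of_real_power)
  obtain i where i: "i < n" "v $ i \<noteq> 0" using v(1,2) by (metis carrier_vecD eq_vecI index_zero_vec)
  have "(\<Sum>i<n. (cmod (v$i))^2) > 0"
    by (rule sum_pos2[of _ i]) (use i in auto)
  hence N0: "N \<noteq> 0" unfolding Nr by (simp del: of_real_power of_real_sum)
  have "cnj z * N = z * N" using cs unfolding s1 Nr by simp
  hence "cnj z = z" using N0 by simp
  hence zr: "z = complex_of_real (Re z)" by (metis Reals_cnj_iff complex_is_Real_iff of_real_Re)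
  have "poly (char_poly ?C) z = complex_of_real (poly (char_poly A) (Re z))"
    by (subst zr, simp add: of_real_hom.char_poly_hom[OF A] of_real_hom.poly_map_poly)
  hence "poly (char_poly A) (Re z) = 0" using \<open>poly (char_poly ?C) z = 0\<close> by simp
  hence "eigenvalue A (Re z)" using eigenvalue_root_char_poly[OF A] by simp
  then obtain w where "eigenvector A w (Re z)" unfolding eigenvalue_def by blast
  thus ?thesis unfolding eigenvector_def using A by auto
qed

lemma block_mult_special:
  fixes A B C D :: "'a :: semiring_1 mat"
  assumes "A \<in> carrier_mat 1 1" "B \<in> carrier_mat m m" "C \<in> carrier_mat 1 1" "D \<in> carrier_mat m m"
  shows "four_block_mat A (0\<^sub>m 1 m) (0\<^sub>m m 1) B * four_block_mat C (0\<^sub>m 1 m) (0\<^sub>m m 1) D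
     = four_block_mat (A * C) (0\<^sub>m 1 m) (0\<^sub>m m 1) (B * D)"
  by (subst mult_four_block_mat[OF assms(1) zero_carrier_mat zero_carrier_mat assms(2) assms(3) zero_carrier_mat zero_carrier_mat assms(4)])
    (use assms in simp)

lemma block_transpose_special:
  fixes A B :: "'a :: semiring_1 mat"
  assumes "A \<in> carrier_mat 1 1" "B \<in> carrier_mat m m"
  shows "(four_block_mat A (0\<^sub>m 1 m) (0\<^sub>m m 1) B)\<^sup>T = four_block_mat A\<^sup>T (0\<^sub>m 1 m) (0\<^sub>m m 1) B\<^sup>T"
  by (subst transpose_four_block_mat[OF assms(1) zero_carrier_mat zero_carrier_mat assms(2)]) simp

lemma spectral:
  fixes A :: "real mat"
  assumes "A \<in> carrier_mat n n" "A\<^sup>T = A"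
  shows "\<exists>P d. P \<in> carrier_mat n n \<and> P\<^sup>T * P = 1\<^sub>m n \<and> P * P\<^sup>T = 1\<^sub>m n \<and> A = P * diagm n d * P\<^sup>T"
  using assms
proof (induction n arbitrary: A)
  case 0
  show ?case
    by (rule exI[of _ "1\<^sub>m 0"], rule exI[of _ "\<lambda>_. 0"], insert 0, auto intro!: eq_matI)
next
  case (Suc m A)
  note A = Suc.prems(1) and sym = Suc.prems(2)
  let ?n = "Suc m"
  obtain e v where v: "v \<in> carrier_vec ?n" "v \<noteq> 0\<^sub>v ?n" "A *\<^sub>v v = e \<cdot>\<^sub>v v"
    using sym_real_eigenvalue[OF A sym] by auto
  have vpos: "v \<bullet> v > 0"
  proof -
    obtain i where i: "i < ?n" "v $ i \<noteq> 0" using v(1,2) by (metis carrier_vecD eq_vecI index_zero_vec)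
    have "(\<Sum>j<?n. v $ j * v $ j) > 0" by (rule sum_pos2[of _ i]) (use i in \<open>auto simp: zero_less_mult_iff linorder_neq_iff\<close>)
    thus ?thesis using v(1) by (simp add: scalar_prod_def lessThan_atLeast0)
  qed
  define u where "u = (1 / sqrt (v \<bullet> v)) \<cdot>\<^sub>v v"
  have u: "u \<in> carrier_vec ?n" unfolding u_def using v by simp
  have uu: "u \<bullet> u = 1" unfolding u_def using v(1) vpos by (simp add: field_simps)
  have Au: "A *\<^sub>v u = e \<cdot>\<^sub>v u" unfolding u_def using v A
    by (simp add: mult_mat_vec smult_smult_assoc mult.commute)
  obtain W where W: "W \<in> carrier_mat ?n ?n" and WW: "W\<^sup>T * W = 1\<^sub>m ?n" and W0: "col W 0 = u"
    using orthonormal_basis_hd[OF u uu] by blast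
  have WW': "W * W\<^sup>T = 1\<^sub>m ?n" using mat_mult_left_right_inverse[OF _ W WW] W by simp
  have orthW: "col W i \<bullet> col W j = (if i = j then 1 else 0)" if "i < ?n" "j < ?n" for i j
  proof -
    have "(W\<^sup>T * W) $$ (i,j) = col W i \<bullet> col W j" using W that by simp
    thus ?thesis using WW that by simp
  qed
  define A' where "A' = W\<^sup>T * A * W"
  have A': "A' \<in> carrier_mat ?n ?n" unfolding A'_def using W A by simp
  have A'sym: "A'\<^sup>T = A'" unfolding A'_def using W A sym
    by (simp add: transpose_mult[of _ ?n ?n _ ?n] assoc_mult_mat[of _ ?n ?n _ ?n _ ?n])
  have A'ij: "A' $$ (i,j) = col W i \<bullet> (A *\<^sub>v col W j)" if "i < ?n" "j < ?n" for i j
    unfolding A'_def using that W A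
    by (simp add: assoc_mult_mat[of _ ?n ?n _ ?n _ ?n] col_mult2 mult_mat_vec_def)
  have A'i0: "A' $$ (i,0) = (if i = 0 then e else 0)" if "i < ?n" for i
    using A'ij[OF that, of 0] W0 Au orthW[OF that, of 0] u W that by simp
  have A'0j: "A' $$ (0,j) = (if j = 0 then e else 0)" if "j < ?n" for j
  proof -
    have "A' $$ (0,j) = A'\<^sup>T $$ (j,0)" using A' that by simp
    thus ?thesis using A'sym A'i0[OF that] by simp
  qed
  define A3 where "A3 = mat m m (\<lambda>(i,j). A' $$ (Suc i, Suc j))"
  have A3: "A3 \<in> carrier_mat m m" unfolding A3_def by simp
  have A3sym: "A3\<^sup>T = A3"
  proof (rule eq_matI)
    fix i j assume "i < dim_row A3" "j < dim_col A3"
    hence ij: "i < m" "j < m" using A3 by auto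
    have "A' $$ (Suc j, Suc i) = A'\<^sup>T $$ (Suc i, Suc j)" using A' ij by simp
    thus "A3\<^sup>T $$ (i,j) = A3 $$ (i,j)" using ij A'sym unfolding A3_def by simp
  qed (use A3 in auto)
  define E where "E = mat 1 1 (\<lambda>_. e)"
  have E: "E \<in> carrier_mat 1 1" unfolding E_def by simp
  have A'block: "A' = four_block_mat E (0\<^sub>m 1 m) (0\<^sub>m m 1) A3"
  proof (rule eq_matI)
    fix i j assume ij: "i < dim_row (four_block_mat E (0\<^sub>m 1 m) (0\<^sub>m m 1) A3)"
      "j < dim_col (four_block_mat E (0\<^sub>m 1 m) (0\<^sub>m m 1) A3)"
    hence ij': "i < ?n" "j < ?n" using E A3 by auto
    show "A' $$ (i,j) = four_block_mat E (0\<^sub>m 1 m) (0\<^sub>m m 1) A3 $$ (i,j)"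
    proof (cases "i = 0")
      case True thus ?thesis using A'0j[OF ij'(2)] ij' E A3 by (simp add: E_def)
    next
      case False
      then obtain i' where i': "i = Suc i'" by (cases i) auto
      show ?thesis
      proof (cases "j = 0")
        case True thus ?thesis using A'i0[OF ij'(1)] ij' E A3 False by (simp add: E_def)
      next
        case False
        then obtain j' where j': "j = Suc j'" by (cases j) auto
        show ?thesis using ij' E A3 i' j' by (simp add: A3_def)
      qed
    qed
  qed (use A' E A3 in auto)
  obtain P3 d3 where P3: "P3 \<in> carrier_mat m m" "P3\<^sup>T * P3 = 1\<^sub>m m" "P3 * P3\<^sup>T = 1\<^sub>m m"
    and A3eq: "A3 = P3 * diagm m d3 * P3\<^sup>T"
    using Suc.IH[OF A3 A3sym] by blast
  define P1 where "P1 = four_block_mat (1\<^sub>m 1) (0\<^sub>m 1 m) (0\<^sub>m m 1) P3"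
  have P1: "P1 \<in> carrier_mat ?n ?n" unfolding P1_def using P3 by (metis four_block_carrier_mat one_carrier_mat plus_1_eq_Suc)
  have P1T: "P1\<^sup>T = four_block_mat (1\<^sub>m 1) (0\<^sub>m 1 m) (0\<^sub>m m 1) P3\<^sup>T"
    unfolding P1_def using block_transpose_special[OF one_carrier_mat P3(1)] by simp
  define d where "d = (\<lambda>i. if i = 0 then e else d3 (i - 1))"
  have Dblock: "diagm ?n d = four_block_mat E (0\<^sub>m 1 m) (0\<^sub>m m 1) (diagm m d3)"
    by (rule eq_matI, auto simp: diagm_def E_def d_def)
  have P1P1: "P1\<^sup>T * P1 = 1\<^sub>m ?n"
  proof -
    have "P1\<^sup>T * P1 = four_block_mat (1\<^sub>m 1 * 1\<^sub>m 1) (0\<^sub>m 1 m) (0\<^sub>m m 1) (P3\<^sup>T * P3)"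
      unfolding P1T by (unfold P1_def, rule block_mult_special) (use P3 in auto)
    also have "\<dots> = four_block_mat (1\<^sub>m 1) (0\<^sub>m 1 m) (0\<^sub>m m 1) (1\<^sub>m m)"
      unfolding P3(2) by (metis left_mult_one_mat one_carrier_mat)
    also have "\<dots> = 1\<^sub>m (1 + m)" by (rule four_block_one_mat)
    finally show ?thesis by simp
  qed
  have P1D: "P1 * diagm ?n d * P1\<^sup>T = A'"
  proof -
    have "P1 * diagm ?n d = four_block_mat (1\<^sub>m 1 * E) (0\<^sub>m 1 m) (0\<^sub>m m 1) (P3 * diagm m d3)"
      unfolding Dblock P1_def by (rule block_mult_special) (use P3 E in auto)
    also have "\<dots> * P1\<^sup>T = four_block_mat (1\<^sub>m 1 * E * 1\<^sub>m 1) (0\<^sub>m 1 m) (0\<^sub>m m 1) (P3 * diagm m d3 * P3\<^sup>T)"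
      unfolding P1T by (rule block_mult_special) (use P3 E in auto)
    also have "\<dots> = A'" unfolding A'block A3eq using E by simp
    finally show ?thesis .
  qed
  define P where "P = W * P1"
  have P: "P \<in> carrier_mat ?n ?n" unfolding P_def using W P1 by simp
  have PP: "P\<^sup>T * P = 1\<^sub>m ?n"
  proof -
    have "P\<^sup>T * P = P1\<^sup>T * (W\<^sup>T * W) * P1" unfolding P_def using W P1
      by (simp add: transpose_mult[of _ ?n ?n _ ?n] assoc_mult_mat[of _ ?n ?n _ ?n _ ?n])
    thus ?thesis using WW P1P1 P1 by simp
  qed
  have PP': "P * P\<^sup>T = 1\<^sub>m ?n" using mat_mult_left_right_inverse[OF _ P PP] P by simp
  have "P * diagm ?n d * P\<^sup>T = W * (P1 * diagm ?n d * P1\<^sup>T) * W\<^sup>T" unfolding P_def using W P1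
    by (simp add: transpose_mult[of _ ?n ?n _ ?n] assoc_mult_mat[of _ ?n ?n _ ?n _ ?n] mult_carrier_mat[of _ ?n ?n _ ?n])
  also have "\<dots> = W * A' * W\<^sup>T" unfolding P1D ..
  also have "\<dots> = (W * W\<^sup>T) * A * (W * W\<^sup>T)" unfolding A'_def using W A
    by (simp add: assoc_mult_mat[of _ ?n ?n _ ?n _ ?n])
  also have "\<dots> = A" using WW' A by simp
  finally show ?case using P PP PP' by metis
qed



lemma entry_PDPT:
  assumes P: "P \<in> carrier_mat n n" and ab: "a < n" "b < n"
  shows "(P * diagm n d * P\<^sup>T) $$ (a,b) = (\<Sum>l<n. P $$ (a,l) * d l * P $$ (b,l))"
proof -
  have PD: "(P * diagm n d) $$ (a,l) = P $$ (a,l) * d l" if "l < n" for l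
  proof -
    have "(P * diagm n d) $$ (a,l) = (\<Sum>j<n. P $$ (a,j) * (if j = l then d j else 0))"
      using P ab that by (simp add: diagm_def scalar_prod_def lessThan_atLeast0 col_def row_def)
    also have "\<dots> = P $$ (a,l) * d l" using that by (simp add: if_distrib cong: if_cong)
    finally show ?thesis .
  qed
  have "(P * diagm n d * P\<^sup>T) $$ (a,b) = (\<Sum>l<n. (P * diagm n d) $$ (a,l) * P $$ (b,l))"
    using P ab by (auto simp: scalar_prod_def lessThan_atLeast0 intro!: sum.cong)
  also have "\<dots> = (\<Sum>l<n. P $$ (a,l) * d l * P $$ (b,l))" by (intro sum.cong refl, simp add: PD)
  finally show ?thesis .
qed

lemma orth_cols:
  assumes P: "P \<in> carrier_mat n n" and PP: "P\<^sup>T * P = 1\<^sub>m n" and ab: "a < n" "b < n"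
  shows "(\<Sum>l<n. P $$ (l,a) * P $$ (l,b)) = (if a = b then 1 else 0)"
proof -
  have "(P\<^sup>T * P) $$ (a,b) = (\<Sum>l<n. P $$ (l,a) * P $$ (l,b))"
    using P ab by (simp add: scalar_prod_def lessThan_atLeast0)
  thus ?thesis using PP ab by simp
qed

lemma orth_rows:
  assumes P: "P \<in> carrier_mat n n" and PP: "P * P\<^sup>T = 1\<^sub>m n" and ab: "a < n" "b < n"
  shows "(\<Sum>l<n. P $$ (a,l) * P $$ (b,l)) = (if a = b then 1 else 0)"
proof -
  have "(P * P\<^sup>T) $$ (a,b) = (\<Sum>l<n. P $$ (a,l) * P $$ (b,l))"
    using P ab by (simp add: scalar_prod_def lessThan_atLeast0)
  thus ?thesis using PP ab by simp
qed

definition qf :: "nat \<Rightarrow> real mat \<Rightarrow> (nat \<Rightarrow> real) \<Rightarrow> real" where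
  "qf n M x = (\<Sum>a<n. \<Sum>b<n. x a * M $$ (a,b) * x b)"

lemma qf_PDPT:
  assumes P: "P \<in> carrier_mat n n"
  shows "qf n (P * diagm n d * P\<^sup>T) x = (\<Sum>l<n. d l * (\<Sum>a<n. P $$ (a,l) * x a)^2)"
proof -
  have e: "\<And>a b. a \<in> {..<n} \<Longrightarrow> b \<in> {..<n} \<Longrightarrow> (P * diagm n d * P\<^sup>T) $$ (a,b) = (\<Sum>l<n. P $$ (a,l) * d l * P $$ (b,l))"
    using entry_PDPT[OF P] by auto
  have "qf n (P * diagm n d * P\<^sup>T) x = (\<Sum>a<n. \<Sum>b<n. x a * (\<Sum>l<n. P $$ (a,l) * d l * P $$ (b,l)) * x b)"
    unfolding qf_def by (intro sum.cong refl) (simp only: e)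
  also have "\<dots> = (\<Sum>a<n. \<Sum>b<n. \<Sum>l<n. d l * ((P $$ (a,l) * x a) * (P $$ (b,l) * x b)))"
    by (simp add: sum_distrib_left sum_distrib_right mult_ac)
  also have "\<dots> = (\<Sum>l<n. \<Sum>a<n. \<Sum>b<n. d l * ((P $$ (a,l) * x a) * (P $$ (b,l) * x b)))"
    by (subst sum.swap, subst (2) sum.swap, rule refl)
  also have "\<dots> = (\<Sum>l<n. d l * (\<Sum>a<n. P $$ (a,l) * x a)^2)"
    apply (unfold power2_eq_square)
    apply (unfold sum_product)
    apply (unfold sum_distrib_left)
    by (rule refl)
  finally show ?thesis .
qed

lemma parseval:
  fixes U :: "nat \<Rightarrow> nat \<Rightarrow> real"
  assumes orth: "\<And>a b. a < n \<Longrightarrow> b < n \<Longrightarrow> (\<Sum>l<n. U a l * U b l) = (if a = b then 1 else 0)"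
  shows "(\<Sum>l<n. (\<Sum>a<n. U a l * x a)^2) = (\<Sum>a<n. (x a)^2)"
proof -
  have "(\<Sum>l<n. (\<Sum>a<n. U a l * x a)^2) = (\<Sum>l<n. \<Sum>a<n. \<Sum>b<n. x a * x b * (U a l * U b l))"
    by (simp add: power2_eq_square sum_product mult_ac)
  also have "\<dots> = (\<Sum>a<n. \<Sum>b<n. \<Sum>l<n. x a * x b * (U a l * U b l))"
    by (subst sum.swap, subst (2) sum.swap, rule refl)
  also have "\<dots> = (\<Sum>a<n. \<Sum>b<n. x a * x b * (if a = b then 1 else 0))"
    by (intro sum.cong refl, simp add: sum_distrib_left[symmetric] orth)
  also have "\<dots> = (\<Sum>a<n. (x a)^2)"
    by (simp add: power2_eq_square if_distrib cong: if_cong)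
  finally show ?thesis .
qed

lemma proots_linear_prod: "proots (\<Prod>a\<leftarrow>xs. [:- a, 1:]) = mset (xs :: real list)"
proof (induction xs)
  case Nil thus ?case by simp
next
  case (Cons x xs)
  have nz: "(\<Prod>a\<leftarrow>xs. [:- a, 1:]) \<noteq> (0 :: real poly)"
    by (auto simp: prod_list_zero_iff)
  have "proots (\<Prod>a\<leftarrow>x # xs. [:- a, 1:]) = proots ([:- x, 1:] * (\<Prod>a\<leftarrow>xs. [:- a, 1:]))"
    by (simp only: list.map prod_list.Cons)
  also have "\<dots> = proots [:- x, 1:] + proots (\<Prod>a\<leftarrow>xs. [:- a, 1:])"
    by (rule proots_mult) (use nz in auto)
  thus ?case using Cons by (simp add: proots_linear_factor)
qed

lemma eig_desc_PDPT:
  assumes A: "A \<in> carrier_mat n n" and P: "P \<in> carrier_mat n n" and PP: "P\<^sup>T * P = 1\<^sub>m n" "P * P\<^sup>T = 1\<^sub>m n"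
    and AP: "A = P * diagm n d * P\<^sup>T"
  shows "eigenvalues_desc A = rev (sort (map d [0..<n]))"
proof -
  have "similar_mat A (diagm n d)"
    unfolding similar_mat_def similar_mat_wit_def Let_def
    by (rule exI[of _ P], rule exI[of _ "P\<^sup>T"], insert A P PP AP, auto)
  hence "char_poly A = char_poly (diagm n d)" by (rule char_poly_similar)
  also have "\<dots> = (\<Prod>a\<leftarrow>diag_mat (diagm n d). [:- a, 1:])"
    by (rule char_poly_upper_triangular[of _ n], simp, auto simp: upper_triangular_def diagm_def)
  also have "diag_mat (diagm n d) = map d [0..<n]"
    by (simp add: diag_mat_def diagm_def)
  finally have cp: "char_poly A = (\<Prod>a\<leftarrow>map d [0..<n]. [:- a, 1:])" .
  show ?thesis unfolding eigenvalues_desc_def cp proots_linear_prod sorted_list_of_multiset_mset ..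
qed



lemma sum_list_take_nth: "k \<le> length ys \<Longrightarrow> sum_list (take k ys) = (\<Sum>j<k. ys ! j)"
  by (simp add: sum_list_sum_nth lessThan_atLeast0 min_absorb1)

lemma sorted_desc_nth:
  fixes xs :: "real list"
  assumes "i \<le> j" "j < length xs"
  shows "rev (sort xs) ! j \<le> rev (sort xs) ! i"
proof -
  let ?s = "sort xs"
  have l: "length ?s = length xs" by simp
  have "rev ?s ! j = ?s ! (length xs - Suc j)" "rev ?s ! i = ?s ! (length xs - Suc i)"
    using assms by (simp_all add: rev_nth)
  moreover have "?s ! (length xs - Suc j) \<le> ?s ! (length xs - Suc i)"
    by (rule sorted_nth_mono) (use assms in auto)
  ultimately show ?thesis by simp
qed

lemma rearr:
  fixes ys :: "real list" and w :: "nat \<Rightarrow> real"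
  assumes len: "length ys = n"
    and mono: "\<And>i j. i \<le> j \<Longrightarrow> j < n \<Longrightarrow> ys ! j \<le> ys ! i"
    and w: "\<And>j. j < n \<Longrightarrow> 0 \<le> w j \<and> w j \<le> 1"
    and ws: "(\<Sum>j<n. w j) = real k"
    and k: "1 \<le> k" "k \<le> n"
  shows "(\<Sum>j<n. ys ! j * w j) \<le> (\<Sum>j<k. ys ! j)"
proof -
  define c where "c = ys ! (k - 1)"
  have split: "\<And>f. (\<Sum>j<n. f j) = (\<Sum>j<k. f j) + (\<Sum>j\<in>{k..<n}. f j)"
    using k by (metis atLeast0LessThan le_add_diff_inverse sum.atLeastLessThan_concat zero_le)
  have A: "ys ! j * w j \<le> ys ! j + c * (w j - 1)" if "j < k" for j
  proof -
    have "c \<le> ys ! j" unfolding c_def using that k by (intro mono) auto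
    moreover have "w j \<le> 1" using w[of j] that k by auto
    ultimately have "(ys ! j - c) * (w j - 1) \<le> 0" by (simp add: mult_nonneg_nonpos)
    thus ?thesis by (simp add: algebra_simps)
  qed
  have B: "ys ! j * w j \<le> c * w j" if "j \<in> {k..<n}" for j
  proof -
    have "ys ! j \<le> c" unfolding c_def using that k by (intro mono) auto
    moreover have "0 \<le> w j" using w[of j] that by auto
    ultimately show ?thesis by (simp add: mult_right_mono)
  qed
  have "(\<Sum>j<n. ys ! j * w j) = (\<Sum>j<k. ys ! j * w j) + (\<Sum>j\<in>{k..<n}. ys ! j * w j)" by (rule split)
  also have "\<dots> \<le> (\<Sum>j<k. ys ! j + c * (w j - 1)) + (\<Sum>j\<in>{k..<n}. c * w j)"
    by (intro add_mono sum_mono A B) auto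
  also have "\<dots> = (\<Sum>j<k. ys ! j) + c * ((\<Sum>j<k. w j) + (\<Sum>j\<in>{k..<n}. w j) - k)"
    by (simp add: sum.distrib sum_distrib_left sum_subtractf algebra_simps)
  also have "(\<Sum>j<k. w j) + (\<Sum>j\<in>{k..<n}. w j) = real k" using split[of w] ws by simp
  finally show ?thesis by simp
qed

lemma topk_repr:
  assumes k: "k \<le> n"
  shows "\<exists>I. I \<subseteq> {..<n} \<and> card I = k \<and>
    sum_list (take k (rev (sort (map d [0..<n])))) = (\<Sum>i\<in>I. d i)"
proof -
  let ?ys = "rev (sort (map d [0..<n]))"
  have "mset ?ys = mset (map d [0..<n])" by simp
  from permutation_Ex_bij[OF this] obtain f where
    f: "bij_betw f {..<n} {..<n}" and fy: "\<And>i. i < n \<Longrightarrow> ?ys ! i = map d [0..<n] ! f i"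
    by auto
  have fy': "?ys ! i = d (f i)" if "i < n" for i
  proof -
    have "f i < n" using f that by (auto simp: bij_betw_def)
    thus ?thesis using fy[OF that] by simp
  qed
  have inj: "inj_on f {..<k}" using f k by (meson bij_betw_def inj_on_subset lessThan_subset_iff)
  have "sum_list (take k ?ys) = (\<Sum>j<k. ?ys ! j)" by (rule sum_list_take_nth) (use k in simp)
  also have "\<dots> = (\<Sum>j<k. d (f j))" using k fy' by (intro sum.cong) auto
  also have "\<dots> = (\<Sum>i\<in>f ` {..<k}. d i)" using sum.reindex[OF inj, of d] by simp
  finally have "sum_list (take k ?ys) = (\<Sum>i\<in>f ` {..<k}. d i)" .
  moreover have "f ` {..<k} \<subseteq> {..<n}" using f k by (auto simp: bij_betw_def)
  moreover have "card (f ` {..<k}) = k" using card_image[OF inj] by simp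
  ultimately show ?thesis by blast
qed



lemma KF:
  fixes A R :: "real mat"
  assumes A: "A \<in> carrier_mat n n" and sym: "A\<^sup>T = A"
    and R: "R \<in> carrier_mat n n" "R\<^sup>T * R = 1\<^sub>m n" "R * R\<^sup>T = 1\<^sub>m n"
    and I: "I \<subseteq> {..<n}" "card I = k" and k: "1 \<le> k" "k \<le> n"
  shows "(\<Sum>i\<in>I. qf n A (\<lambda>a. R $$ (a,i))) \<le> S_k k A"
proof -
  obtain P d where P: "P \<in> carrier_mat n n" "P\<^sup>T * P = 1\<^sub>m n" "P * P\<^sup>T = 1\<^sub>m n"
    and AP: "A = P * diagm n d * P\<^sup>T" using spectral[OF A sym] by blast
  have ev: "eigenvalues_desc A = rev (sort (map d [0..<n]))" by (rule eig_desc_PDPT[OF A P AP])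
  define c where "c l i = (\<Sum>a<n. P $$ (a,l) * R $$ (a,i))" for l i
  define w where "w l = (\<Sum>i\<in>I. (c l i)^2)" for l
  have finI: "finite I" using I finite_subset by blast
  have "(\<Sum>i\<in>I. qf n A (\<lambda>a. R $$ (a,i))) = (\<Sum>i\<in>I. \<Sum>l<n. d l * (c l i)^2)"
    unfolding c_def AP qf_PDPT[OF P(1)] ..
  also have "\<dots> = (\<Sum>l<n. d l * w l)" unfolding w_def
    by (subst sum.swap) (simp add: sum_distrib_left)
  finally have eq1: "(\<Sum>i\<in>I. qf n A (\<lambda>a. R $$ (a,i))) = (\<Sum>l<n. d l * w l)" .
  have w01: "0 \<le> w l \<and> w l \<le> 1" if l: "l < n" for l
  proof
    show "0 \<le> w l" unfolding w_def by (simp add: sum_nonneg)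
    have "w l \<le> (\<Sum>i<n. (c l i)^2)" unfolding w_def
      by (rule sum_mono2) (use I in auto)
    also have "\<dots> = (\<Sum>i<n. (\<Sum>a<n. R $$ (a,i) * P $$ (a,l))^2)" unfolding c_def by (simp add: mult.commute)
    also have "\<dots> = (\<Sum>a<n. (P $$ (a,l))^2)"
      by (rule parseval[of n "\<lambda>a i. R $$ (a,i)"]) (rule orth_rows[OF R(1) R(3)])
    also have "\<dots> = 1" using orth_cols[OF P(1) P(2) l l] by (simp add: power2_eq_square)
    finally show "w l \<le> 1" .
  qed
  have wsum: "(\<Sum>l<n. w l) = real k"
  proof -
    have "(\<Sum>l<n. w l) = (\<Sum>i\<in>I. \<Sum>l<n. (c l i)^2)" unfolding w_def by (rule sum.swap)
    also have "\<dots> = (\<Sum>i\<in>I. 1)"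
    proof (rule sum.cong[OF refl])
      fix i assume "i \<in> I" hence i: "i < n" using I by auto
      have "(\<Sum>l<n. (c l i)^2) = (\<Sum>a<n. (R $$ (a,i))^2)"
        unfolding c_def by (rule parseval[of n "\<lambda>a l. P $$ (a,l)"]) (rule orth_rows[OF P(1) P(3)])
      also have "\<dots> = 1" using orth_cols[OF R(1) R(2) i i] by (simp add: power2_eq_square)
      finally show "(\<Sum>l<n. (c l i)^2) = 1" .
    qed
    finally show ?thesis using I by simp
  qed
  let ?ys = "rev (sort (map d [0..<n]))"
  have "mset ?ys = mset (map d [0..<n])" by simp
  from permutation_Ex_bij[OF this] obtain f where
    f: "bij_betw f {..<n} {..<n}" and fy: "\<And>i. i < n \<Longrightarrow> ?ys ! i = map d [0..<n] ! f i"
    by auto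
  have fn: "f i < n" if "i < n" for i using f that by (auto simp: bij_betw_def)
  have fy': "?ys ! i = d (f i)" if "i < n" for i using fy[OF that] fn[OF that] by simp
  have "(\<Sum>l<n. d l * w l) = (\<Sum>j<n. d (f j) * w (f j))"
    using sum.reindex_bij_betw[OF f, of "\<lambda>l. d l * w l"] by simp
  also have "\<dots> = (\<Sum>j<n. ?ys ! j * w (f j))" using fy' by (intro sum.cong) auto
  also have "\<dots> \<le> (\<Sum>j<k. ?ys ! j)"
  proof (rule rearr[of _ n])
    show "length ?ys = n" by simp
    show "?ys ! j \<le> ?ys ! i" if "i \<le> j" "j < n" for i j using sorted_desc_nth[of i j "map d [0..<n]"] that by simp
    show "0 \<le> w (f j) \<and> w (f j) \<le> 1" if "j < n" for j using w01[OF fn[OF that]] .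
    show "(\<Sum>j<n. w (f j)) = real k" using sum.reindex_bij_betw[OF f, of w] wsum by simp
  qed (use k in auto)
  also have "\<dots> = S_k k A" unfolding S_k_def ev using sum_list_take_nth[of k ?ys] k by simp
  finally show ?thesis using eq1 by simp
qed

lemma S_k_repr:
  fixes A :: "real mat"
  assumes A: "A \<in> carrier_mat n n" and sym: "A\<^sup>T = A" and k: "k \<le> n"
  shows "\<exists>P I. P \<in> carrier_mat n n \<and> P\<^sup>T * P = 1\<^sub>m n \<and> P * P\<^sup>T = 1\<^sub>m n \<and> I \<subseteq> {..<n} \<and> card I = k
     \<and> S_k k A = (\<Sum>i\<in>I. qf n A (\<lambda>a. P $$ (a,i)))"
proof -
  obtain P d where P: "P \<in> carrier_mat n n" "P\<^sup>T * P = 1\<^sub>m n" "P * P\<^sup>T = 1\<^sub>m n"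
    and AP: "A = P * diagm n d * P\<^sup>T" using spectral[OF A sym] by blast
  have ev: "eigenvalues_desc A = rev (sort (map d [0..<n]))" by (rule eig_desc_PDPT[OF A P AP])
  obtain I where I: "I \<subseteq> {..<n}" "card I = k" and sI: "sum_list (take k (rev (sort (map d [0..<n])))) = (\<Sum>i\<in>I. d i)"
    using topk_repr[OF k] by blast
  have "qf n A (\<lambda>a. P $$ (a,i)) = d i" if i: "i < n" for i
  proof -
    have "qf n A (\<lambda>a. P $$ (a,i)) = (\<Sum>l<n. d l * (\<Sum>a<n. P $$ (a,l) * P $$ (a,i))^2)"
      unfolding AP qf_PDPT[OF P(1)] ..
    also have "\<dots> = (\<Sum>l<n. if l = i then d l else 0)"
      by (intro sum.cong refl) (simp add: orth_cols[OF P(1) P(2)] i)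
    also have "\<dots> = d i" using i by simp
    finally show ?thesis .
  qed
  hence "S_k k A = (\<Sum>i\<in>I. qf n A (\<lambda>a. P $$ (a,i)))" unfolding S_k_def ev sI using I
    by (intro sum.cong) auto
  thus ?thesis using P I by blast
qed

lemma distinct_sub: "distinct xs \<Longrightarrow> set xs \<subseteq> set_mset M \<Longrightarrow> mset xs \<subseteq># M"
proof (induction xs arbitrary: M)
  case Nil thus ?case by simp
next
  case (Cons x xs)
  have x: "x \<in># M" using Cons by simp
  have "set xs \<subseteq> set_mset (M - {#x#})"
  proof
    fix y assume y: "y \<in> set xs"
    hence "y \<noteq> x" "y \<in># M" using Cons by auto
    thus "y \<in># M - {#x#}" by (simp add: in_diff_count)
  qed
  hence "mset xs \<subseteq># M - {#x#}" using Cons by simp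
  thus ?case using x by (metis add_mset_remove_trivial_If mset.simps(2) mset_subset_eq_add_mset_cancel)
qed

lemma eig_known:
  fixes A :: "real mat" and \<mu> :: "nat \<Rightarrow> real"
  assumes A: "A \<in> carrier_mat n n"
   and ev: "\<And>m. 1 \<le> m \<Longrightarrow> m \<le> n \<Longrightarrow> \<exists>v. v \<in> carrier_vec n \<and> v \<noteq> 0\<^sub>v n \<and> A *\<^sub>v v = \<mu> m \<cdot>\<^sub>v v"
   and dec: "\<And>m m'. 1 \<le> m \<Longrightarrow> m < m' \<Longrightarrow> m' \<le> n \<Longrightarrow> \<mu> m' < \<mu> m"
  shows "eigenvalues_desc A = map \<mu> [1..<n+1]"
proof -
  let ?xs = "rev (map \<mu> [1..<n+1])"
  have sw: "sorted_wrt (<) ?xs"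
    unfolding sorted_wrt_rev sorted_wrt_map by (auto simp del: upt_Suc simp: sorted_wrt_iff_nth_less intro!: dec)
  hence sd: "sorted ?xs" "distinct ?xs" by (auto simp: strict_sorted_iff)
  have cp0: "char_poly A \<noteq> 0" using degree_monic_char_poly[OF A] by auto
  have "set ?xs \<subseteq> set_mset (proots (char_poly A))"
  proof
    fix x assume "x \<in> set ?xs"
    then obtain m where m: "1 \<le> m" "m \<le> n" "x = \<mu> m" by auto
    obtain v where "v \<in> carrier_vec n \<and> v \<noteq> 0\<^sub>v n \<and> A *\<^sub>v v = \<mu> m \<cdot>\<^sub>v v" using ev[OF m(1,2)] by blast
    hence "eigenvalue A x" unfolding eigenvalue_def eigenvector_def using A m by auto
    hence "poly (char_poly A) x = 0" using eigenvalue_root_char_poly[OF A] by simp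
    thus "x \<in> set_mset (proots (char_poly A))" using cp0 by simp
  qed
  hence sub: "mset ?xs \<subseteq># proots (char_poly A)" using distinct_sub sd by blast
  have "size (proots (char_poly A)) \<le> n" using size_proots_le[of "char_poly A"] degree_monic_char_poly[OF A] by simp
  moreover have "size (mset ?xs) = n" by simp
  ultimately have "\<not> mset ?xs \<subset># proots (char_poly A)" using mset_subset_size[of "mset ?xs" "proots (char_poly A)"] by linarith
  hence eq: "proots (char_poly A) = mset ?xs" using sub by (simp add: subset_mset.le_less)
  show ?thesis unfolding eigenvalues_desc_def eq sorted_list_of_multiset_mset sorted_sort_id[OF sd(1)] by simp
qed



definition degv :: "nat \<Rightarrow> nat \<Rightarrow> real" where
  "degv n a = (if 0 < a then 1 else 0) + (if a + 1 < n then 1 else 0)"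

lemma adj_sum:
  fixes f :: "nat \<Rightarrow> real"
  assumes a: "a < n"
  shows "(\<Sum>b<n. (if a + 1 = b \<or> b + 1 = a then 1 else 0) * f b)
     = (if 0 < a then f (a - 1) else 0) + (if a + 1 < n then f (a + 1) else 0)"
proof -
  have "(\<Sum>b<n. (if a + 1 = b \<or> b + 1 = a then 1 else 0) * f b)
      = (\<Sum>b<n. (if b = a + 1 then f b else 0) + (if 0 < a \<and> b = a - 1 then f b else 0))"
    by (intro sum.cong refl) auto
  also have "\<dots> = (\<Sum>b<n. if b = a + 1 then f b else 0) + (\<Sum>b<n. if 0 < a \<and> b = a - 1 then f b else 0)"
    by (rule sum.distrib)
  also have "(\<Sum>b<n. if b = a + 1 then f b else 0) = (if a + 1 < n then f (a + 1) else 0)"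
    by (simp add: sum.delta')
  also have "(\<Sum>b<n. if 0 < a \<and> b = a - 1 then f b else 0) = (if 0 < a then f (a - 1) else 0)"
    using a by (cases "0 < a") (simp_all add: sum.delta')
  finally show ?thesis by simp
qed

lemma path_adj_dims[simp]: "dim_row (path_adj n) = n" "dim_col (path_adj n) = n" unfolding path_adj_def by simp_all
lemma path_deg_dims[simp]: "dim_row (path_deg n) = n" "dim_col (path_deg n) = n" unfolding path_deg_def by simp_all

lemma A_alpha_idx: "a < n \<Longrightarrow> b < n \<Longrightarrow>
   A_alpha_path \<alpha> n $$ (a,b) = \<alpha> * path_deg n $$ (a,b) + (1 - \<alpha>) * path_adj n $$ (a,b)"
  unfolding A_alpha_path_def by simp

lemma path_adj_carrier[simp]: "path_adj n \<in> carrier_mat n n" unfolding path_adj_def by simp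
lemma path_adj_idx: "a < n \<Longrightarrow> b < n \<Longrightarrow> path_adj n $$ (a,b) = (if a + 1 = b \<or> b + 1 = a then 1 else 0)"
  unfolding path_adj_def by simp

lemma path_deg_idx: "a < n \<Longrightarrow> b < n \<Longrightarrow> path_deg n $$ (a,b) = (if a = b then degv n a else 0)"
proof -
  assume a: "a < n" and b: "b < n"
  have "(\<Sum>l<n. path_adj n $$ (a, l)) = (\<Sum>l<n. (if a + 1 = l \<or> l + 1 = a then 1 else 0) * (\<lambda>_. 1::real) l)"
    by (intro sum.cong refl) (simp add: path_adj_idx a)
  also have "\<dots> = degv n a" unfolding adj_sum[OF a] degv_def by simp
  finally have "(\<Sum>l<n. path_adj n $$ (a, l)) = degv n a" .
  thus ?thesis unfolding path_deg_def using a b by auto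
qed
lemma path_deg_carrier[simp]: "path_deg n \<in> carrier_mat n n" unfolding path_deg_def by simp

lemma path_adj_sym: "(path_adj n)\<^sup>T = path_adj n"
  by (rule eq_matI) (auto simp: path_adj_idx)
lemma path_deg_sym: "(path_deg n)\<^sup>T = path_deg n"
  by (rule eq_matI) (auto simp: path_deg_idx)

lemma A_alpha_carrier: "A_alpha_path \<alpha> n \<in> carrier_mat n n" unfolding A_alpha_path_def by simp
lemma A_alpha_sym: "(A_alpha_path \<alpha> n)\<^sup>T = A_alpha_path \<alpha> n"
  unfolding A_alpha_path_def
  by (rule eq_matI) (auto simp: path_deg_idx path_adj_idx)
lemma qf_lin:
  assumes "\<And>a b. a < n \<Longrightarrow> b < n \<Longrightarrow> M $$ (a,b) = c1 * M1 $$ (a,b) + c2 * M2 $$ (a,b)"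
  shows "qf n M x = c1 * qf n M1 x + c2 * qf n M2 x"
proof -
  have "qf n M x = (\<Sum>a<n. \<Sum>b<n. c1 * (x a * M1 $$ (a,b) * x b) + c2 * (x a * M2 $$ (a,b) * x b))"
    unfolding qf_def by (intro sum.cong refl) (simp add: assms algebra_simps)
  also have "\<dots> = c1 * qf n M1 x + c2 * qf n M2 x"
    unfolding qf_def by (simp add: sum.distrib sum_distrib_left)
  finally show ?thesis .
qed

lemma Qx:
  fixes x :: "nat \<Rightarrow> real"
  assumes a: "a < n"
  shows "((path_deg n + path_adj n) *\<^sub>v vec n x) $ a
    = degv n a * x a + (if 0 < a then x (a - 1) else 0) + (if a + 1 < n then x (a + 1) else 0)"
proof -
  have "((path_deg n + path_adj n) *\<^sub>v vec n x) $ a = (\<Sum>b<n. (path_deg n $$ (a,b) + path_adj n $$ (a,b)) * x b)"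
    using a by (simp add: scalar_prod_def lessThan_atLeast0 row_def)
  also have "\<dots> = (\<Sum>b<n. (if b = a then degv n a * x b else 0)) + (\<Sum>b<n. (if a + 1 = b \<or> b + 1 = a then 1 else 0) * x b)"
    by (subst sum.distrib[symmetric], intro sum.cong refl) (auto simp: path_deg_idx path_adj_idx a algebra_simps)
  also have "\<dots> = degv n a * x a + (if 0 < a then x (a - 1) else 0) + (if a + 1 < n then x (a + 1) else 0)"
    using a adj_sum[OF a, of x] by (simp add: sum.delta)
  finally show ?thesis .
qed

lemma Ax:
  fixes x :: "nat \<Rightarrow> real"
  assumes a: "a < n"
  shows "(path_adj n *\<^sub>v vec n x) $ a
    = (if 0 < a then x (a - 1) else 0) + (if a + 1 < n then x (a + 1) else 0)"
proof -
  have "(path_adj n *\<^sub>v vec n x) $ a = (\<Sum>b<n. (if a + 1 = b \<or> b + 1 = a then 1 else 0) * x b)"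
    using a by (auto simp: scalar_prod_def lessThan_atLeast0 row_def path_adj_idx intro!: sum.cong)
  thus ?thesis using adj_sum[OF a] by simp
qed



lemma sin_pair: "sin (u - v) + sin (u + v) = 2 * sin u * cos (v::real)"
  by (simp add: sin_add sin_diff)

lemma vec_nz: "n > 0 \<Longrightarrow> x 0 \<noteq> 0 \<Longrightarrow> vec n x \<noteq> 0\<^sub>v n"
  by (metis index_vec index_zero_vec(1))

lemma Q_eigvec:
  assumes m: "1 \<le> m" "m \<le> n"
  shows "\<exists>v. v \<in> carrier_vec n \<and> v \<noteq> 0\<^sub>v n \<and>
     (path_deg n + path_adj n) *\<^sub>v v = (2 + 2 * cos (real m * pi / real n)) \<cdot>\<^sub>v v"
proof -
  define h where "h = real m * pi / (2 * real n)"
  define g where "g t = sin ((2 * t + 1) * h)" for t :: real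
  have n: "n > 0" using m by auto
  have h: "0 < h" "h \<le> pi / 2" unfolding h_def using m n by (auto simp: field_simps)
  have g0: "g 0 > 0" unfolding g_def using h by (auto intro!: sin_gt_zero)
  have gm1: "g 0 + g (-1) = 0" unfolding g_def by simp
  have gn: "g (real n - 1) + g (real n) = 0"
  proof -
    have "g (real n - 1) + g (real n) = sin (2 * real n * h - h) + sin (2 * real n * h + h)"
      unfolding g_def by (simp add: algebra_simps)
    also have "\<dots> = 2 * sin (2 * real n * h) * cos h" by (rule sin_pair)
    also have "2 * real n * h = real m * pi" unfolding h_def using n by (simp add: field_simps)
    finally show ?thesis by (simp add: sin_npi)
  qed
  have grec: "g (t - 1) + g (t + 1) = 2 * cos (2 * h) * g t" for t
  proof -
    have "g (t - 1) + g (t + 1) = sin ((2 * t + 1) * h - 2 * h) + sin ((2 * t + 1) * h + 2 * h)"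
      unfolding g_def by (simp add: algebra_simps)
    also have "\<dots> = 2 * sin ((2 * t + 1) * h) * cos (2 * h)" by (rule sin_pair)
    finally show ?thesis unfolding g_def by simp
  qed
  have ch: "cos (2 * h) = cos (real m * pi / real n)" unfolding h_def by (simp add: field_simps)
  define x where "x a = g (real a)" for a :: nat
  have "(path_deg n + path_adj n) *\<^sub>v vec n x = (2 + 2 * cos (real m * pi / real n)) \<cdot>\<^sub>v vec n x"
  proof (rule eq_vecI)
    fix a assume "a < dim_vec ((2 + 2 * cos (real m * pi / real n)) \<cdot>\<^sub>v vec n x)"
    hence a: "a < n" by simp
    have gnA: "g (real a) + g (real a + 1) = 0" if "\<not> a + 1 < n"
    proof -
      have ra: "real a = real n - 1" using a that by linarith
      show ?thesis using gn by (simp add: ra)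
    qed
    have "((path_deg n + path_adj n) *\<^sub>v vec n x) $ a
        = degv n a * x a + (if 0 < a then x (a - 1) else 0) + (if a + 1 < n then x (a + 1) else 0)"
      by (rule Qx[OF a])
    also have "\<dots> = 2 * g (real a) + g (real a - 1) + g (real a + 1)"
      using gm1 gnA by (cases "0 < a"; cases "a + 1 < n") (simp_all add: degv_def x_def of_nat_diff algebra_simps)
    also have "\<dots> = (2 + 2 * cos (real m * pi / real n)) * x a"
      using grec[of "real a"] ch unfolding x_def by (simp add: algebra_simps)
    finally show "((path_deg n + path_adj n) *\<^sub>v vec n x) $ a = ((2 + 2 * cos (real m * pi / real n)) \<cdot>\<^sub>v vec n x) $ a"
      using a by simp
  qed simp
  moreover have "vec n x \<noteq> 0\<^sub>v n" by (rule vec_nz[OF n]) (use g0 in \<open>simp add: x_def\<close>)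
  ultimately show ?thesis by (intro exI[of _ "vec n x"]) simp
qed

lemma A_eigvec:
  assumes m: "1 \<le> m" "m \<le> n"
  shows "\<exists>v. v \<in> carrier_vec n \<and> v \<noteq> 0\<^sub>v n \<and>
     path_adj n *\<^sub>v v = (2 * cos (real m * pi / (real n + 1))) \<cdot>\<^sub>v v"
proof -
  define h where "h = real m * pi / (real n + 1)"
  define g where "g t = sin ((t + 1) * h)" for t :: real
  have n: "n > 0" using m by auto
  have mp: "real m * pi < (real n + 1) * pi" by (rule mult_strict_right_mono) (use m in auto)
  have h: "0 < h" "h < pi" unfolding h_def using m n mp by (auto simp: pos_divide_less_eq)
  have g0: "g 0 > 0" unfolding g_def using h by (auto intro!: sin_gt_zero)
  have gm1: "g (-1) = 0" unfolding g_def by simp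
  have gn: "g (real n) = 0"
  proof -
    have "(real n + 1) * h = real m * pi" unfolding h_def by (simp add: field_simps)
    thus ?thesis unfolding g_def by (simp add: sin_npi)
  qed
  have grec: "g (t - 1) + g (t + 1) = 2 * cos h * g t" for t
  proof -
    have "g (t - 1) + g (t + 1) = sin ((t + 1) * h - h) + sin ((t + 1) * h + h)"
      unfolding g_def by (simp add: algebra_simps)
    also have "\<dots> = 2 * sin ((t + 1) * h) * cos h" by (rule sin_pair)
    finally show ?thesis unfolding g_def by simp
  qed
  define x where "x a = g (real a)" for a :: nat
  have "path_adj n *\<^sub>v vec n x = (2 * cos h) \<cdot>\<^sub>v vec n x"
  proof (rule eq_vecI)
    fix a assume "a < dim_vec ((2 * cos h) \<cdot>\<^sub>v vec n x)"
    hence a: "a < n" by simp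
    have L: "(if 0 < a then x (a - 1) else 0) = g (real a - 1)"
      using gm1 unfolding x_def by (cases "0 < a") (auto simp: of_nat_diff)
    have R: "(if a + 1 < n then x (a + 1) else 0) = g (real a + 1)"
    proof (cases "a + 1 < n")
      case True thus ?thesis unfolding x_def by (simp add: add.commute)
    next
      case False
      hence "real a + 1 = real n" using a by linarith
      thus ?thesis using False gn by simp
    qed
    have "(path_adj n *\<^sub>v vec n x) $ a = (if 0 < a then x (a - 1) else 0) + (if a + 1 < n then x (a + 1) else 0)"
      by (rule Ax[OF a])
    also have "\<dots> = 2 * cos h * x a" using L R grec[of "real a"] unfolding x_def by linarith
    finally show "(path_adj n *\<^sub>v vec n x) $ a = ((2 * cos h) \<cdot>\<^sub>v vec n x) $ a"
      using a by simp
  qed simp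
  moreover have "vec n x \<noteq> 0\<^sub>v n" by (rule vec_nz[OF n]) (use g0 in \<open>simp add: x_def\<close>)
  ultimately show ?thesis unfolding h_def by (intro exI[of _ "vec n x"]) simp
qed



lemma Q_spec:
  assumes n: "1 \<le> n"
  shows "eigenvalues_desc (path_deg n + path_adj n) = map (\<lambda>m. 2 + 2 * cos (real m * pi / real n)) [1..<n+1]"
proof (rule eig_known)
  show "path_deg n + path_adj n \<in> carrier_mat n n" by simp
  show "\<exists>v. v \<in> carrier_vec n \<and> v \<noteq> 0\<^sub>v n \<and> (path_deg n + path_adj n) *\<^sub>v v = (2 + 2 * cos (real m * pi / real n)) \<cdot>\<^sub>v v"
    if "1 \<le> m" "m \<le> n" for m using Q_eigvec[OF that] .
  show "2 + 2 * cos (real m' * pi / real n) < 2 + 2 * cos (real m * pi / real n)"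
    if "1 \<le> m" "m < m'" "m' \<le> n" for m m'
  proof -
    have "cos (real m' * pi / real n) < cos (real m * pi / real n)"
    proof (rule cos_monotone_0_pi)
      show "0 \<le> real m * pi / real n" by simp
      show "real m * pi / real n < real m' * pi / real n" using that n by (simp add: divide_strict_right_mono)
      show "real m' * pi / real n \<le> pi" using that n by (simp add: pos_divide_le_eq)
    qed
    thus ?thesis by simp
  qed
qed

lemma A_spec:
  assumes n: "1 \<le> n"
  shows "eigenvalues_desc (path_adj n) = map (\<lambda>m. 2 * cos (real m * pi / (real n + 1))) [1..<n+1]"
proof (rule eig_known)
  show "path_adj n \<in> carrier_mat n n" by simp
  show "\<exists>v. v \<in> carrier_vec n \<and> v \<noteq> 0\<^sub>v n \<and> path_adj n *\<^sub>v v = (2 * cos (real m * pi / (real n + 1))) \<cdot>\<^sub>v v"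
    if "1 \<le> m" "m \<le> n" for m using A_eigvec[OF that] .
  show "2 * cos (real m' * pi / (real n + 1)) < 2 * cos (real m * pi / (real n + 1))"
    if "1 \<le> m" "m < m'" "m' \<le> n" for m m'
  proof -
    have "cos (real m' * pi / (real n + 1)) < cos (real m * pi / (real n + 1))"
    proof (rule cos_monotone_0_pi)
      show "0 \<le> real m * pi / (real n + 1)" by simp
      show "real m * pi / (real n + 1) < real m' * pi / (real n + 1)" using that
        by (intro divide_strict_right_mono) auto
      have "real m' * pi \<le> (real n + 1) * pi" using that by (intro mult_right_mono) auto
      thus "real m' * pi / (real n + 1) \<le> pi" by (simp add: pos_divide_le_eq)
    qed
    thus ?thesis by simp
  qed
qed

lemma trig_sum:
  fixes \<theta> :: real
  assumes s: "sin (\<theta> / 2) \<noteq> 0"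
  shows "(\<Sum>m=1..k. 2 * cos (real m * \<theta>)) = sin ((2 * real k + 1) * \<theta> / 2) / sin (\<theta> / 2) - 1"
proof (induction k)
  case 0 thus ?case using s by simp
next
  case (Suc k)
  have key: "2 * cos (real (Suc k) * \<theta>) * sin (\<theta> / 2)
      = sin ((2 * real (Suc k) + 1) * \<theta> / 2) - sin ((2 * real k + 1) * \<theta> / 2)"
  proof -
    have a: "(2 * real (Suc k) + 1) * \<theta> / 2 = real (Suc k) * \<theta> + \<theta> / 2" by (simp add: field_simps)
    have b: "(2 * real k + 1) * \<theta> / 2 = real (Suc k) * \<theta> - \<theta> / 2" by (simp add: field_simps)
    show ?thesis unfolding a b by (simp add: sin_add sin_diff)
  qed
  have "(\<Sum>m=1..Suc k. 2 * cos (real m * \<theta>)) = (\<Sum>m=1..k. 2 * cos (real m * \<theta>)) + 2 * cos (real (Suc k) * \<theta>)"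
    by simp
  also have "\<dots> = sin ((2 * real k + 1) * \<theta> / 2) / sin (\<theta> / 2) - 1 + 2 * cos (real (Suc k) * \<theta>)"
    using Suc by simp
  also have "2 * cos (real (Suc k) * \<theta>) = (sin ((2 * real (Suc k) + 1) * \<theta> / 2) - sin ((2 * real k + 1) * \<theta> / 2)) / sin (\<theta> / 2)"
    using key s by (simp add: field_simps)
  also have "sin ((2 * real k + 1) * \<theta> / 2) / sin (\<theta> / 2) - 1 + (sin ((2 * real (Suc k) + 1) * \<theta> / 2) - sin ((2 * real k + 1) * \<theta> / 2)) / sin (\<theta> / 2)
     = sin ((2 * real (Suc k) + 1) * \<theta> / 2) / sin (\<theta> / 2) - 1"
    by (simp add: diff_divide_distrib)
  finally show ?case .
qed

lemma sum_take_map: "k \<le> n \<Longrightarrow> sum_list (take k (map f [1..<n+1])) = (\<Sum>m=1..k. f m)"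
proof -
  assume k: "k \<le> n"
  have "take k (map f [1..<n+1]) = map f [1..<k+1]" using k by (simp add: take_map take_upt del: upt_Suc)
  thus ?thesis by (simp add: sum_list_distinct_conv_sum_set atLeastLessThanSuc_atLeastAtMost del: upt_Suc)
qed

lemma S_k_Q:
  assumes k: "1 \<le> k" "k \<le> n"
  shows "S_k k (path_deg n + path_adj n) = 2 * real k - 1 + (1 / sin (pi / (2 * real n))) * sin ((2 * real k + 1) * pi / (2 * real n))"
proof -
  have n: "1 \<le> n" using k by simp
  have s: "sin ((pi / real n) / 2) \<noteq> 0"
  proof -
    have "0 < (pi / real n) / 2" "(pi / real n) / 2 < pi" using n by (auto simp: field_simps)
    thus ?thesis using sin_gt_zero by (metis less_irrefl)
  qed
  have "S_k k (path_deg n + path_adj n) = (\<Sum>m=1..k. 2 + 2 * cos (real m * pi / real n))"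
    unfolding S_k_def Q_spec[OF n] sum_take_map[OF k(2)] ..
  also have "\<dots> = 2 * real k + (\<Sum>m=1..k. 2 * cos (real m * (pi / real n)))" by (simp add: sum.distrib)
  also have "\<dots> = 2 * real k + (sin ((2 * real k + 1) * (pi / real n) / 2) / sin ((pi / real n) / 2) - 1)"
    using trig_sum[OF s, of k] by simp
  finally show ?thesis by (simp add: field_simps)
qed

lemma S_k_A:
  assumes k: "1 \<le> k" "k \<le> n"
  shows "S_k k (path_adj n) = (1 / sin (pi / (2 * (real n + 1)))) * sin ((2 * real k + 1) * pi / (2 * (real n + 1))) - 1"
proof -
  have n: "1 \<le> n" using k by simp
  have s: "sin ((pi / (real n + 1)) / 2) \<noteq> 0"
  proof -
    have "0 < (pi / (real n + 1)) / 2" "(pi / (real n + 1)) / 2 < pi" using n pi_gt_zero by (auto simp: field_simps add_pos_pos)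
    thus ?thesis using sin_gt_zero by (metis less_irrefl)
  qed
  have "S_k k (path_adj n) = (\<Sum>m=1..k. 2 * cos (real m * (pi / (real n + 1))))"
    unfolding S_k_def A_spec[OF n] sum_take_map[OF k(2)] by (simp add: mult.assoc)
  also have "\<dots> = sin ((2 * real k + 1) * (pi / (real n + 1)) / 2) / sin ((pi / (real n + 1)) / 2) - 1"
    using trig_sum[OF s, of k] by simp
  finally show ?thesis by (simp add: field_simps)
qed



lemma qf_D: "qf n (path_deg n) x = (\<Sum>a<n. degv n a * (x a)^2)"
  unfolding qf_def
proof (intro sum.cong refl)
  fix a assume "a \<in> {..<n}"
  hence a: "a < n" by simp
  have "(\<Sum>b<n. x a * path_deg n $$ (a, b) * x b) = (\<Sum>b<n. if b = a then degv n a * (x a)^2 else 0)"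
    by (intro sum.cong refl) (auto simp: path_deg_idx a power2_eq_square)
  also have "\<dots> = degv n a * (x a)^2" using a by simp
  finally show "(\<Sum>b<n. x a * path_deg n $$ (a, b) * x b) = degv n a * (x a)^2" .
qed

lemma qf_D_le: "qf n (path_deg n) x \<le> 2 * (\<Sum>a<n. (x a)^2)"
proof -
  have "qf n (path_deg n) x \<le> (\<Sum>a<n. 2 * (x a)^2)"
    unfolding qf_D by (intro sum_mono mult_right_mono) (auto simp: degv_def)
  thus ?thesis by (simp add: sum_distrib_left)
qed

theorem theorem4p4:
  fixes \<alpha> :: real and n k :: nat
  assumes "1 \<le> k" and "k \<le> n"
  shows "(0 \<le> \<alpha> \<and> \<alpha> < 1/2 \<longrightarrow>
           S_k k (A_alpha_path \<alpha> n) \<le>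
             2 * \<alpha> * k + \<alpha> - 1
             + \<alpha> * (1 / sin (pi / (2 * n))) * sin ((2 * k + 1) * pi / (2 * n))
             + (1 - 2 * \<alpha>) * (1 / sin (pi / (2 * (n + 1)))) * sin ((2 * k + 1) * pi / (2 * (n + 1))))
       \<and> (1/2 \<le> \<alpha> \<and> \<alpha> \<le> 1 \<longrightarrow>
           S_k k (A_alpha_path \<alpha> n) \<le>
             2 * \<alpha> * k + (1 - \<alpha>) * ((1 / sin (pi / (2 * n))) * sin ((2 * k + 1) * pi / (2 * n)) - 1))"
proof -
  note k = assms
  let ?M = "A_alpha_path \<alpha> n" and ?D = "path_deg n" and ?A = "path_adj n"
  let ?Q = "?D + ?A"
  obtain P I where P: "P \<in> carrier_mat n n" "P\<^sup>T * P = 1\<^sub>m n" "P * P\<^sup>T = 1\<^sub>m n"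
    and I: "I \<subseteq> {..<n}" "card I = k" and SM: "S_k k ?M = (\<Sum>i\<in>I. qf n ?M (\<lambda>a. P $$ (a,i)))"
    using S_k_repr[OF A_alpha_carrier A_alpha_sym k(2)] by blast
  define sD where "sD = (\<Sum>i\<in>I. qf n ?D (\<lambda>a. P $$ (a,i)))"
  define sA where "sA = (\<Sum>i\<in>I. qf n ?A (\<lambda>a. P $$ (a,i)))"
  define sQ where "sQ = (\<Sum>i\<in>I. qf n ?Q (\<lambda>a. P $$ (a,i)))"
  have qM: "qf n ?M x = \<alpha> * qf n ?D x + (1 - \<alpha>) * qf n ?A x" for x
    by (rule qf_lin) (simp add: A_alpha_idx)
  have qQ: "qf n ?Q x = 1 * qf n ?D x + 1 * qf n ?A x" for x
    by (rule qf_lin) simp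
  have SMe: "S_k k ?M = \<alpha> * sD + (1 - \<alpha>) * sA"
    unfolding SM sD_def sA_def qM by (simp add: sum.distrib sum_distrib_left)
  have sQe: "sQ = sD + sA" unfolding sQ_def sD_def sA_def qQ by (simp add: sum.distrib)
  have Qsym: "?Q\<^sup>T = ?Q" by (rule eq_matI) (auto simp: path_deg_idx path_adj_idx)
  have KQ: "sQ \<le> S_k k ?Q" unfolding sQ_def
    by (rule KF[OF _ Qsym P I k]) simp
  have KA: "sA \<le> S_k k ?A" unfolding sA_def
    by (rule KF[OF path_adj_carrier path_adj_sym P I k])
  have KD: "sD \<le> 2 * real k"
  proof -
    have "sD \<le> (\<Sum>i\<in>I. 2 * (\<Sum>a<n. (P $$ (a,i))^2))" unfolding sD_def
      by (intro sum_mono qf_D_le)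
    also have "\<dots> = (\<Sum>i\<in>I. 2)"
    proof (intro sum.cong refl)
      fix i assume "i \<in> I" hence i: "i < n" using I by auto
      show "2 * (\<Sum>a<n. (P $$ (a,i))^2) = 2" using orth_cols[OF P(1) P(2) i i] by (simp add: power2_eq_square)
    qed
    finally show ?thesis using I by simp
  qed
  have SQ: "S_k k ?Q = 2 * real k - 1 + (1 / sin (pi / (2 * real n))) * sin ((2 * real k + 1) * pi / (2 * real n))"
    by (rule S_k_Q[OF k])
  have SA: "S_k k ?A = (1 / sin (pi / (2 * (real n + 1)))) * sin ((2 * real k + 1) * pi / (2 * (real n + 1))) - 1"
    by (rule S_k_A[OF k])
  show ?thesis
  proof (intro conjI impI)
    assume a: "0 \<le> \<alpha> \<and> \<alpha> < 1/2"
    have "S_k k ?M = \<alpha> * sQ + (1 - 2 * \<alpha>) * sA" unfolding SMe sQe by (simp add: algebra_simps)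
    also have "\<dots> \<le> \<alpha> * S_k k ?Q + (1 - 2 * \<alpha>) * S_k k ?A"
      using a KQ KA by (intro add_mono mult_left_mono) auto
    finally show "S_k k ?M \<le> 2 * \<alpha> * k + \<alpha> - 1
             + \<alpha> * (1 / sin (pi / (2 * n))) * sin ((2 * k + 1) * pi / (2 * n))
             + (1 - 2 * \<alpha>) * (1 / sin (pi / (2 * (n + 1)))) * sin ((2 * k + 1) * pi / (2 * (n + 1)))"
      unfolding SQ SA by (simp add: algebra_simps)
  next
    assume a: "1/2 \<le> \<alpha> \<and> \<alpha> \<le> 1"
    have "S_k k ?M = (1 - \<alpha>) * sQ + (2 * \<alpha> - 1) * sD" unfolding SMe sQe by (simp add: algebra_simps)
    also have "\<dots> \<le> (1 - \<alpha>) * S_k k ?Q + (2 * \<alpha> - 1) * (2 * real k)"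
      using a KQ KD by (intro add_mono mult_left_mono) auto
    finally show "S_k k ?M \<le> 2 * \<alpha> * k + (1 - \<alpha>) * ((1 / sin (pi / (2 * n))) * sin ((2 * k + 1) * pi / (2 * n)) - 1)"
      unfolding SQ by (simp add: algebra_simps)
  qed
qed

end
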